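(* Consider the fully discrete scheme described in the context. Any solution of the scheme satisfies, for every $\Delta t>0$, the discrete energy law $$\frac{\tilde F^{n+1}-\tilde F^n}{\Delta t}=-\Delta x\Delta y\Big[\sum_{i=0}^{N_x}\sum_{j=1}^{N_y}\big(A_x(\psi\bar M^{n+\frac12})\,|D_x(\chi\mu_*^{n+\frac12})|^2\big)_{i+\frac12,j}+\sum_{i=1}^{N_x}\sum_{j=0}^{N_y}\big(A_y(\psi\bar M^{n+\frac12})\,|D_y(\chi\mu_*^{n+\frac12})|^2\big)_{i,j+\frac12}\Big]$$ $$-\Delta x\Delta y\sum_{i=1}^{N_x}\sum_{j=1}^{N_y}\tfrac12\Gamma^{-1}\Big\{|D_x\psi|_{i-\frac12,j}\big(A_x\tfrac{\tilde\phi^{n+1}-\tilde\phi^n}{\Delta t}\big)^2_{i-\frac12,j}+|D_x\psi|_{i+\frac12,j}\big(A_x\tfrac{\tilde\phi^{n+1}-\tilde\phi^n}{\Delta t}\big)^2_{i+\frac12,j}+|D_y\psi|_{i,j-\frac12}\big(A_y\tfrac{\tilde\phi^{n+1}-\tilde\phi^n}{\Delta t}\big)^2_{i,j-\frac12}+|D_y\psi|_{i,j+\frac12}\big(A_y\tfrac{\tilde\phi^{n+1}-\tilde\phi^n}{\Delta t}\big)^2_{i,j+\frac12}\Big\}$$ $$-\Delta x\Delta y\sum_{i=1}^{N_x}\sum_{j=1}^{N_y}\mu^{n+\frac12}_{*,i,j}\,\chi_{i,j}\,\mathcal B(h_3)_{i,j},$$ where the discrete energy is $$\tilde F^n=\Delta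 x\Delta y\sum_{i=1}^{N_x}\sum_{j=1}^{N_y}\Big\{\tfrac12\psi_{i,j}|q^n_{i,j}|^2+\tfrac12K\big[(A_x\psi)_{i+\frac12,j}(D_x\tilde\phi^n)^2_{i+\frac12,j}+(A_y\psi)_{i,j+\frac12}(D_y\tilde\phi^n)^2_{i,j+\frac12}\big]+\mathcal B\big(\tfrac12\alpha(\tilde\phi^n-h_1)^2\big)^{\sharp}_{i,j}\Big\},$$ with $\mathcal B(\cdot)^{\sharp}$ defined in the context. Therefore the scheme is unconditionally energy stable: in particular, when $h_3\equiv0$, $\tilde F^{n+1}\le\tilde F^n$ for every $\Delta t>0$.
   Context: Domain and grid: $\Omega=[-\tfrac12L_x,\tfrac12L_x]\times[-\tfrac12L_y,\tfrac12L_y]$ is divided into $N_x\times N_y$ uniform cells with $\Delta x=L_x/N_x$, $\Delta y=L_y/N_y$; grid functions $u_{i,j}$ live at cell centers $i=1,\dots,N_x$, $j=1,\dots,N_y$, with ghost indices $i=0,N_x+1$, $j=0,N_y+1$. For a cell-centered $u$ define face quantities $(A_xu)_{i+\frac12,j}=\tfrac12(u_{i+1,j}+u_{i,j})$, $(D_xu)_{i+\frac12,j}=(u_{i+1,j}-u_{i,j})/\Delta x$ ($i=0,\dots,N_x$), and analogously $(A_yu)_{i,j+\frac12}$, $(D_yu)_{i,j+\frac12}$; for a face function $w$, $(D_xw)_{i,j}=(w_{i+\frac12,j}-w_{i-\frac12,j})/\Delta x$, $(D_yw)_{i,j}=(w_{i,j+\frac12}-w_{i,j-\frac12})/\Delta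 y$. Set $D_h(a,u)_{i,j}=D_x(A_xa\,D_xu)_{i,j}+D_y(A_ya\,D_yu)_{i,j}$. Given data: a grid function $\psi>0$ (discrete approximation of the characteristic function of the original domain $\Omega_1\subset\Omega$) with $\chi=1/\psi$; constants $K>0$, $\alpha\ge0$, $\Gamma>0$, $\Delta t>0$; a positive mobility grid function $\bar M^{n+\frac12}$; time-independent grid functions $h_1,h_2,h_3$; $g(\phi)=f'(\phi)/\sqrt{2f(\phi)+2A}$ for a bulk potential $f$ and constant $A$ with $2f+2A>0$, and $\bar g^{n+\frac12}_{i,j}$ denotes $g$ evaluated at $\tfrac32\tilde\phi^n_{i,j}-\tfrac12\tilde\phi^{n-1}_{i,j}$ ($n\ge1$) or at $\tilde\phi^0_{i,j}$ ($n=0$). Notation $u^{n+\frac12}=\tfrac12(u^{n+1}+u^n)$. For a cell-centered $w$ define $\mathcal B(w)_{i,j}=\tfrac12\big[|D_x\psi|_{i-\frac12,j}(A_xw)_{i-\frac12,j}+|D_x\psi|_{i+\frac12,j}(A_xw)_{i+\frac12,j}+|D_y\psi|_{i,j-\frac12}(A_yw)_{i,j-\frac12}+|D_y\psi|_{i,j+\frac12}(A_yw)_{i,j+\frac12}\big]$, and define the boundary energy density $\mathcal B(\cdot)^{\sharp}_{i,j}=\tfrac12\sum_{e}|D\psi|_e\big[\tfrac12\alpha\big((A\tilde\phi^n)_e-(Ah_1)_e\big)^2-(Ah_2)_e(A\tilde\phi^n)_e\big]$, where $e$ runs over the four faces $(i\pm\frac12,j)$, $(i,j\pm\frac12)$ of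 cell $(i,j)$, with $|D\psi|_e$, $A$ meaning $|D_x\psi|$, $A_x$ on $x$-faces and $|D_y\psi|$, $A_y$ on $y$-faces. The scheme: given $\tilde\phi^n,q^n$, find $\tilde\phi^{n+1},q^{n+1},\mu_*^{n+\frac12}$ with, at every cell $(i,j)$, (1) $\frac{\tilde\phi^{n+1}-\tilde\phi^n}{\Delta t}=\chi\,D_h(\psi\bar M^{n+\frac12},\chi\mu_*^{n+\frac12})-\chi\,\mathcal B(h_3)$; (2) $\mu_*^{n+\frac12}=\psi\,\bar g^{n+\frac12}q^{n+\frac12}-K\,D_h(\psi,\tilde\phi^{n+\frac12})+\mathcal B\big(\alpha(\tilde\phi^{n+\frac12}-h_1)-h_2+\Gamma^{-1}\frac{\tilde\phi^{n+1}-\tilde\phi^n}{\Delta t}\big)$; (3) $q^{n+1}-q^n=\bar g^{n+\frac12}(\tilde\phi^{n+1}-\tilde\phi^n)$. Boundary conditions (discrete homogeneous Neumann): the ghost values of $\tilde\phi^{n},\tilde\phi^{n+1}$, of $\psi$ (hence of $\chi$), and of $\mu_*^{n+\frac12}$ equal the adjacent interior values, e.g. $u_{0,j}=u_{1,j}$, $u_{N_x+1,j}=u_{N_x,j}$, $u_{i,0}=u_{i,1}$, $u_{i,N_y+1}=u_{i,N_y}$. *)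

theory Defs
  imports Complex_Main
begin

type_synonym grid = "int \<Rightarrow> int \<Rightarrow> real"

text \<open>Cell-centred grid functions u i j (i, j integers; interior 1..N, ghosts 0 and N+1).
 A face function on x-faces is indexed by the cell to its left: w i j represents w at (i+1/2, j);
 likewise on y-faces w i j represents w at (i, j+1/2).\<close>

definition Ax :: "grid \<Rightarrow> grid" where
  "Ax u = (\<lambda>i j. (u (i+1) j + u i j) / 2)"
definition Ay :: "grid \<Rightarrow> grid" where
  "Ay u = (\<lambda>i j. (u i (j+1) + u i j) / 2)"
definition Dx :: "real \<Rightarrow> grid \<Rightarrow> grid" where
  "Dx dx u = (\<lambda>i j. (u (i+1) j - u i j) / dx)"
definition Dy :: "real \<Rightarrow> grid \<Rightarrow> grid" where
  "Dy dy u = (\<lambda>i j. (u i (j+1) - u i j) / dy)"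

definition DDx :: "real \<Rightarrow> grid \<Rightarrow> grid" where
  "DDx dx w = (\<lambda>i j. (w i j - w (i-1) j) / dx)"
definition DDy :: "real \<Rightarrow> grid \<Rightarrow> grid" where
  "DDy dy w = (\<lambda>i j. (w i j - w i (j-1)) / dy)"

definition Dh :: "real \<Rightarrow> real \<Rightarrow> grid \<Rightarrow> grid \<Rightarrow> grid" where
  "Dh dx dy a u = (\<lambda>i j.
     DDx dx (\<lambda>k l. Ax a k l * Dx dx u k l) i j + DDy dy (\<lambda>k l. Ay a k l * Dy dy u k l) i j)"

definition Bop :: "real \<Rightarrow> real \<Rightarrow> grid \<Rightarrow> grid \<Rightarrow> grid" where
  "Bop dx dy psi w = (\<lambda>i j. (1/2) *
     ( \<bar>Dx dx psi (i-1) j\<bar> * Ax w (i-1) j + \<bar>Dx dx psi i j\<bar> * Ax w i j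
     + \<bar>Dy dy psi i (j-1)\<bar> * Ay w i (j-1) + \<bar>Dy dy psi i j\<bar> * Ay w i j))"

definition bdens :: "real \<Rightarrow> real \<Rightarrow> real \<Rightarrow> real \<Rightarrow> real" where
  "bdens \<alpha> a b p = (1/2) * \<alpha> * (p - a)^2 - b * p"

definition Bsharp :: "real \<Rightarrow> real \<Rightarrow> grid \<Rightarrow> real \<Rightarrow> grid \<Rightarrow> grid \<Rightarrow> grid \<Rightarrow> grid" where
  "Bsharp dx dy psi \<alpha> h1 h2 \<phi> = (\<lambda>i j. (1/2) *
     ( \<bar>Dx dx psi (i-1) j\<bar> * bdens \<alpha> (Ax h1 (i-1) j) (Ax h2 (i-1) j) (Ax \<phi> (i-1) j)
     + \<bar>Dx dx psi i j\<bar> * bdens \<alpha> (Ax h1 i j) (Ax h2 i j) (Ax \<phi> i j)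
     + \<bar>Dy dy psi i (j-1)\<bar> * bdens \<alpha> (Ay h1 i (j-1)) (Ay h2 i (j-1)) (Ay \<phi> i (j-1))
     + \<bar>Dy dy psi i j\<bar> * bdens \<alpha> (Ay h1 i j) (Ay h2 i j) (Ay \<phi> i j)))"

definition neumann :: "nat \<Rightarrow> nat \<Rightarrow> grid \<Rightarrow> bool" where
  "neumann Nx Ny u \<longleftrightarrow>
     (\<forall>j\<in>{1..int Ny}. u 0 j = u 1 j \<and> u (int Nx + 1) j = u (int Nx) j) \<and>
     (\<forall>i\<in>{1..int Nx}. u i 0 = u i 1 \<and> u i (int Ny + 1) = u i (int Ny))"

definition gfun :: "(real \<Rightarrow> real) \<Rightarrow> (real \<Rightarrow> real) \<Rightarrow> real \<Rightarrow> real \<Rightarrow> real" where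
  "gfun f f' A x = f' x / sqrt (2 * f x + 2 * A)"

definition energy :: "nat \<Rightarrow> nat \<Rightarrow> real \<Rightarrow> real \<Rightarrow> grid \<Rightarrow> real \<Rightarrow> real
                       \<Rightarrow> grid \<Rightarrow> grid \<Rightarrow> grid \<Rightarrow> grid \<Rightarrow> real" where
  "energy Nx Ny dx dy psi K \<alpha> h1 h2 \<phi> q =
     dx * dy * (\<Sum>i\<in>{1..int Nx}. \<Sum>j\<in>{1..int Ny}.
        (1/2) * psi i j * (q i j)^2
      + (1/2) * K * (Ax psi i j * (Dx dx \<phi> i j)^2 + Ay psi i j * (Dy dy \<phi> i j)^2)
      + Bsharp dx dy psi \<alpha> h1 h2 \<phi> i j)"

end

theory Submission
  imports Defs
begin


definition SS :: "nat \<Rightarrow> nat \<Rightarrow> grid \<Rightarrow> real" where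
  "SS Nx Ny X = (\<Sum>i\<in>{1..int Nx}. \<Sum>j\<in>{1..int Ny}. X i j)"

lemma SS_add: "SS Nx Ny (\<lambda>i j. f i j + g i j) = SS Nx Ny f + SS Nx Ny g"
  by (simp add: SS_def sum.distrib)
lemma SS_diff: "SS Nx Ny (\<lambda>i j. f i j - g i j) = SS Nx Ny f - SS Nx Ny g"
  by (simp add: SS_def sum_subtractf)
lemma SS_cmul: "SS Nx Ny (\<lambda>i j. c * f i j) = c * SS Nx Ny f"
  by (simp add: SS_def sum_distrib_left)
lemma SS_divc: "SS Nx Ny (\<lambda>i j. f i j / c) = SS Nx Ny f / c"
  by (simp add: SS_def sum_divide_distrib)
lemma SS_cong: "(\<And>i j. i \<in> {1..int Nx} \<Longrightarrow> j \<in> {1..int Ny} \<Longrightarrow> f i j = g i j)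
   \<Longrightarrow> SS Nx Ny f = SS Nx Ny g"
  unfolding SS_def by (intro sum.cong refl) auto

lemma int_interval_Suc: "{1..1 + int n} = insert (1 + int n) {1..int n}"
  by auto

lemma shift1_aux: "(\<Sum>i\<in>{1..int n}. g (i-1)) + g (int n) = g 0 + (\<Sum>i\<in>{1..int n}. (g i :: real))"
proof (induction n)
  case 0 then show ?case by simp
next
  case (Suc n)
  have fin: "1 + int n \<notin> {1..int n}" by auto
  show ?case using Suc by (simp add: int_interval_Suc fin algebra_simps)
qed

lemma shift1: "g 0 = g (int N) \<Longrightarrow> (\<Sum>i\<in>{1..int N}. g (i-1)) = (\<Sum>i\<in>{1..int N}. (g i :: real))"
  using shift1_aux[of g N] by simp

lemma shiftx: "(\<And>j. j \<in> {1..int Ny} \<Longrightarrow> g 0 j = g (int Nx) j)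
   \<Longrightarrow> SS Nx Ny (\<lambda>i j. g (i-1) j) = SS Nx Ny g"
  unfolding SS_def
  by (rule shift1[where g="\<lambda>i. \<Sum>j\<in>{1..int Ny}. g i j"]) (intro sum.cong refl, auto)

lemma shifty: "(\<And>i. i \<in> {1..int Nx} \<Longrightarrow> g i 0 = g i (int Ny))
   \<Longrightarrow> SS Nx Ny (\<lambda>i j. g i (j-1)) = SS Nx Ny g"
  unfolding SS_def
  by (intro sum.cong refl shift1) auto

lemma neumann_D:
  assumes "neumann Nx Ny u"
  shows "j \<in> {1..int Ny} \<Longrightarrow> Dx dx u 0 j = 0" "j \<in> {1..int Ny} \<Longrightarrow> Dx dx u (int Nx) j = 0"
    "i \<in> {1..int Nx} \<Longrightarrow> Dy dy u i 0 = 0" "i \<in> {1..int Nx} \<Longrightarrow> Dy dy u i (int Ny) = 0"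
  using assms by (auto simp: neumann_def Dx_def Dy_def)

lemma neumann_comb:
  assumes "neumann Nx Ny u" "neumann Nx Ny v"
  shows "neumann Nx Ny (\<lambda>i j. F (u i j) (v i j))"
  using assms unfolding neumann_def by auto

lemma face_sum:
  assumes "\<And>j. j \<in> {1..int Ny} \<Longrightarrow> Gx 0 j = 0 \<and> Gx (int Nx) j = 0"
    and "\<And>i. i \<in> {1..int Nx} \<Longrightarrow> Gy i 0 = 0 \<and> Gy i (int Ny) = 0"
  shows "SS Nx Ny (\<lambda>i j. (1/2) * (Gx (i-1) j + Gx i j + Gy i (j-1) + Gy i j))
       = SS Nx Ny (\<lambda>i j. Gx i j + Gy i j)"
proof -
  have "SS Nx Ny (\<lambda>i j. (1/2) * (Gx (i-1) j + Gx i j + Gy i (j-1) + Gy i j))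
     = (1/2) * (SS Nx Ny (\<lambda>i j. Gx (i-1) j) + SS Nx Ny Gx + SS Nx Ny (\<lambda>i j. Gy i (j-1)) + SS Nx Ny Gy)"
    by (simp only: SS_cmul SS_add)
  also have "SS Nx Ny (\<lambda>i j. Gx (i-1) j) = SS Nx Ny Gx" using assms(1) by (intro shiftx) auto
  also have "SS Nx Ny (\<lambda>i j. Gy i (j-1)) = SS Nx Ny Gy" using assms(2) by (intro shifty) auto
  finally show ?thesis by (simp add: SS_add)
qed

lemma Bop_sum:
  assumes "neumann Nx Ny psi"
  shows "SS Nx Ny (\<lambda>i j. Bop dx dy psi W i j * v i j)
     = SS Nx Ny (\<lambda>i j. \<bar>Dx dx psi i j\<bar> * Ax W i j * Ax v i j + \<bar>Dy dy psi i j\<bar> * Ay W i j * Ay v i j)"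
proof -
  define gx where "gx = (\<lambda>i j. \<bar>Dx dx psi i j\<bar> * Ax W i j * v (i+1) j)"
  define gy where "gy = (\<lambda>i j. \<bar>Dy dy psi i j\<bar> * Ay W i j * v i (j+1))"
  define hx where "hx = (\<lambda>i j. \<bar>Dx dx psi i j\<bar> * Ax W i j * v i j)"
  define hy where "hy = (\<lambda>i j. \<bar>Dy dy psi i j\<bar> * Ay W i j * v i j)"
  have "SS Nx Ny (\<lambda>i j. Bop dx dy psi W i j * v i j)
     = SS Nx Ny (\<lambda>i j. (1/2) * (gx (i-1) j + hx i j + gy i (j-1) + hy i j))"
    by (rule SS_cong) (simp add: Bop_def gx_def gy_def hx_def hy_def algebra_simps)
  also have "\<dots> = (1/2) * (SS Nx Ny (\<lambda>i j. gx (i-1) j) + SS Nx Ny hx + SS Nx Ny (\<lambda>i j. gy i (j-1)) + SS Nx Ny hy)"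
    by (simp only: SS_cmul SS_add)
  also have "SS Nx Ny (\<lambda>i j. gx (i-1) j) = SS Nx Ny gx"
    using neumann_D[OF assms] by (intro shiftx) (simp add: gx_def)
  also have "SS Nx Ny (\<lambda>i j. gy i (j-1)) = SS Nx Ny gy"
    using neumann_D[OF assms] by (intro shifty) (simp add: gy_def)
  also have "(1/2) * (SS Nx Ny gx + SS Nx Ny hx + SS Nx Ny gy + SS Nx Ny hy)
     = SS Nx Ny (\<lambda>i j. (1/2) * (gx i j + hx i j + gy i j + hy i j))"
    by (simp only: SS_cmul SS_add)
  also have "\<dots> = SS Nx Ny (\<lambda>i j. \<bar>Dx dx psi i j\<bar> * Ax W i j * Ax v i j + \<bar>Dy dy psi i j\<bar> * Ay W i j * Ay v i j)"
    by (rule SS_cong) (simp add: gx_def gy_def hx_def hy_def Ax_def Ay_def field_simps)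
  finally show ?thesis .
qed

lemma Dh_sum:
  assumes "neumann Nx Ny u"
  shows "SS Nx Ny (\<lambda>i j. w i j * Dh dx dy a u i j)
     = - SS Nx Ny (\<lambda>i j. Ax a i j * Dx dx u i j * Dx dx w i j + Ay a i j * Dy dy u i j * Dy dy w i j)"
proof -
  define Fx where "Fx = (\<lambda>i j. Ax a i j * Dx dx u i j)"
  define Fy where "Fy = (\<lambda>i j. Ay a i j * Dy dy u i j)"
  define gx where "gx = (\<lambda>i j. w (i+1) j * Fx i j / dx)"
  define gy where "gy = (\<lambda>i j. w i (j+1) * Fy i j / dy)"
  have "SS Nx Ny (\<lambda>i j. w i j * Dh dx dy a u i j)
     = SS Nx Ny (\<lambda>i j. w i j * Fx i j / dx - gx (i-1) j + (w i j * Fy i j / dy - gy i (j-1)))"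
    by (rule SS_cong) (simp add: Dh_def DDx_def DDy_def Fx_def Fy_def gx_def gy_def diff_divide_distrib algebra_simps)
  also have "\<dots> = SS Nx Ny (\<lambda>i j. w i j * Fx i j / dx) - SS Nx Ny (\<lambda>i j. gx (i-1) j)
      + (SS Nx Ny (\<lambda>i j. w i j * Fy i j / dy) - SS Nx Ny (\<lambda>i j. gy i (j-1)))"
    by (simp add: SS_add SS_diff)
  also have "SS Nx Ny (\<lambda>i j. gx (i-1) j) = SS Nx Ny gx"
    using neumann_D[OF assms] by (intro shiftx) (simp add: gx_def Fx_def)
  also have "SS Nx Ny (\<lambda>i j. gy i (j-1)) = SS Nx Ny gy"
    using neumann_D[OF assms] by (intro shifty) (simp add: gy_def Fy_def)
  also have "SS Nx Ny (\<lambda>i j. w i j * Fx i j / dx) - SS Nx Ny gx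
      + (SS Nx Ny (\<lambda>i j. w i j * Fy i j / dy) - SS Nx Ny gy)
     = SS Nx Ny (\<lambda>i j. w i j * Fx i j / dx - gx i j + (w i j * Fy i j / dy - gy i j))"
    by (simp add: SS_add SS_diff)
  also have "\<dots> = - SS Nx Ny (\<lambda>i j. Ax a i j * Dx dx u i j * Dx dx w i j + Ay a i j * Dy dy u i j * Dy dy w i j)"
    unfolding SS_cmul[of Nx Ny "-1", simplified, symmetric]
    by (rule SS_cong) (simp add: gx_def gy_def Fx_def Fy_def Dx_def Dy_def diff_divide_distrib algebra_simps)
  finally show ?thesis .
qed


lemma SS_nonneg: "(\<And>i j. i \<in> {1..int Nx} \<Longrightarrow> j \<in> {1..int Ny} \<Longrightarrow> f i j \<ge> 0) \<Longrightarrow> SS Nx Ny f \<ge> 0"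
  unfolding SS_def by (intro sum_nonneg) auto

lemma energy_face:
  assumes "neumann Nx Ny psi"
  shows "energy Nx Ny dx dy psi K \<alpha> h1 h2 p r = dx * dy * SS Nx Ny (\<lambda>i j.
      (1/2) * psi i j * (r i j)^2
      + (1/2) * K * (Ax psi i j * (Dx dx p i j)^2 + Ay psi i j * (Dy dy p i j)^2)
      + (\<bar>Dx dx psi i j\<bar> * bdens \<alpha> (Ax h1 i j) (Ax h2 i j) (Ax p i j)
         + \<bar>Dy dy psi i j\<bar> * bdens \<alpha> (Ay h1 i j) (Ay h2 i j) (Ay p i j)))"
proof -
  define Gx where "Gx = (\<lambda>i j. \<bar>Dx dx psi i j\<bar> * bdens \<alpha> (Ax h1 i j) (Ax h2 i j) (Ax p i j))"
  define Gy where "Gy = (\<lambda>i j. \<bar>Dy dy psi i j\<bar> * bdens \<alpha> (Ay h1 i j) (Ay h2 i j) (Ay p i j))"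
  define X where "X = (\<lambda>i j. (1/2) * psi i j * (r i j)^2
      + (1/2) * K * (Ax psi i j * (Dx dx p i j)^2 + Ay psi i j * (Dy dy p i j)^2))"
  have "energy Nx Ny dx dy psi K \<alpha> h1 h2 p r = dx * dy * SS Nx Ny (\<lambda>i j. X i j + Bsharp dx dy psi \<alpha> h1 h2 p i j)"
    unfolding energy_def SS_def X_def by simp
  also have "\<dots> = dx * dy * (SS Nx Ny X + SS Nx Ny (\<lambda>i j. (1/2) * (Gx (i-1) j + Gx i j + Gy i (j-1) + Gy i j)))"
    unfolding SS_add[symmetric] Gx_def Gy_def Bsharp_def by simp
  also have "SS Nx Ny (\<lambda>i j. (1/2) * (Gx (i-1) j + Gx i j + Gy i (j-1) + Gy i j)) = SS Nx Ny (\<lambda>i j. Gx i j + Gy i j)"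
    using neumann_D[OF assms] by (intro face_sum) (auto simp: Gx_def Gy_def)
  finally show ?thesis unfolding SS_add[symmetric] X_def Gx_def Gy_def by simp
qed

lemma Bop_zero:
  assumes "neumann Nx Ny psi" "\<forall>i\<in>{1..int Nx}. \<forall>j\<in>{1..int Ny}. h3 i j = 0"
    "i \<in> {1..int Nx}" "j \<in> {1..int Ny}"
  shows "Bop dx dy psi h3 i j = 0"
proof -
  note D = neumann_D[OF assms(1)]
  have a: "\<bar>Dx dx psi (i-1) j\<bar> * Ax h3 (i-1) j = 0"
  proof (cases "i = 1")
    case True then show ?thesis using D(1)[of j] assms(4) by simp
  next
    case False then show ?thesis using assms(2-4) by (simp add: Ax_def)
  qed
  have b: "\<bar>Dx dx psi i j\<bar> * Ax h3 i j = 0"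
  proof (cases "i = int Nx")
    case True then show ?thesis using D(2)[of j] assms(4) by simp
  next
    case False then show ?thesis using assms(2-4) by (simp add: Ax_def)
  qed
  have c: "\<bar>Dy dy psi i (j-1)\<bar> * Ay h3 i (j-1) = 0"
  proof (cases "j = 1")
    case True then show ?thesis using D(3)[of i] assms(3) by simp
  next
    case False then show ?thesis using assms(2-4) by (simp add: Ay_def)
  qed
  have e: "\<bar>Dy dy psi i j\<bar> * Ay h3 i j = 0"
  proof (cases "j = int Ny")
    case True then show ?thesis using D(4)[of i] assms(3) by simp
  next
    case False then show ?thesis using assms(2-4) by (simp add: Ay_def)
  qed
  show ?thesis unfolding Bop_def by (simp only: a b c e) simp
qed


lemma face_W:
  fixes dt :: real
  assumes "dt \<noteq> 0" "AW = \<alpha> * ((p1 + p0) / 2 - a) - b + (1/\<Gamma>) * D" "D = (p1 - p0) / dt"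
  shows "c * AW * D = c * (bdens \<alpha> a b p1 - bdens \<alpha> a b p0) / dt + (1/\<Gamma>) * c * D^2"
proof -
  have e: "(\<alpha> * ((p1 + p0) / 2 - a) - b) * D = (bdens \<alpha> a b p1 - bdens \<alpha> a b p0) / dt"
    unfolding bdens_def assms(3) using assms(1) by (simp add: field_simps power2_eq_square)
  have "c * AW * D = c * ((\<alpha> * ((p1 + p0) / 2 - a) - b) * D) + (1/\<Gamma>) * c * D^2"
    unfolding assms(2) by (simp add: algebra_simps power2_eq_square)
  then show ?thesis unfolding e by simp
qed

theorem theorem2:
  fixes Lx Ly :: real and Nx Ny :: nat
    and psi :: grid and K \<alpha> \<Gamma> dt A :: real
    and Mb :: "nat \<Rightarrow> grid" and h1 h2 h3 :: grid
    and f f' :: "real \<Rightarrow> real"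
    and \<phi> q \<mu> :: "nat \<Rightarrow> grid"
    and dx dy :: real and chi :: grid and g :: "real \<Rightarrow> real"
    and gbar :: "nat \<Rightarrow> grid"
  defines "dx \<equiv> Lx / real Nx" and "dy \<equiv> Ly / real Ny"
    and "chi \<equiv> (\<lambda>i j. 1 / psi i j)"
    and "g \<equiv> gfun f f' A"
    and "gbar \<equiv> (\<lambda>n i j. if n = 0 then g (\<phi> 0 i j)
                         else g ((3/2) * \<phi> n i j - (1/2) * \<phi> (n - 1) i j))"
  assumes "Lx > 0" and "Ly > 0" and "Nx \<ge> 1" and "Ny \<ge> 1"
    and psi_pos: "\<forall>i\<in>{1..int Nx}. \<forall>j\<in>{1..int Ny}. psi i j > 0"
    and "K > 0" and "\<alpha> \<ge> 0" and "\<Gamma> > 0" and "dt > 0"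
    and M_pos: "\<forall>n. \<forall>i\<in>{1..int Nx}. \<forall>j\<in>{1..int Ny}. Mb n i j > 0"
    and f_deriv: "\<forall>x. (f has_real_derivative f' x) (at x)"
    and f_pos: "\<forall>x. 2 * f x + 2 * A > 0"
    and bc_psi: "neumann Nx Ny psi"
    and bc_phi: "\<forall>n. neumann Nx Ny (\<phi> n)"
    and bc_mu: "\<forall>n. neumann Nx Ny (\<mu> n)"
    and eq1: "\<forall>n. \<forall>i\<in>{1..int Nx}. \<forall>j\<in>{1..int Ny}.
       (\<phi> (Suc n) i j - \<phi> n i j) / dt
         = chi i j * Dh dx dy (\<lambda>k l. psi k l * Mb n k l) (\<lambda>k l. chi k l * \<mu> n k l) i j
           - chi i j * Bop dx dy psi h3 i j"
    and eq2: "\<forall>n. \<forall>i\<in>{1..int Nx}. \<forall>j\<in>{1..int Ny}.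
       \<mu> n i j = psi i j * gbar n i j * ((q (Suc n) i j + q n i j) / 2)
         - K * Dh dx dy psi (\<lambda>k l. (\<phi> (Suc n) k l + \<phi> n k l) / 2) i j
         + Bop dx dy psi (\<lambda>k l. \<alpha> * ((\<phi> (Suc n) k l + \<phi> n k l) / 2 - h1 k l) - h2 k l
                                 + (1 / \<Gamma>) * ((\<phi> (Suc n) k l - \<phi> n k l) / dt)) i j"
    and eq3: "\<forall>n. \<forall>i\<in>{1..int Nx}. \<forall>j\<in>{1..int Ny}.
       q (Suc n) i j - q n i j = gbar n i j * (\<phi> (Suc n) i j - \<phi> n i j)"
  shows "\<forall>n.
     (energy Nx Ny dx dy psi K \<alpha> h1 h2 (\<phi> (Suc n)) (q (Suc n))
        - energy Nx Ny dx dy psi K \<alpha> h1 h2 (\<phi> n) (q n)) / dt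
     = - dx * dy *
         ((\<Sum>i\<in>{0..int Nx}. \<Sum>j\<in>{1..int Ny}.
             Ax (\<lambda>k l. psi k l * Mb n k l) i j * (Dx dx (\<lambda>k l. chi k l * \<mu> n k l) i j)^2)
        + (\<Sum>i\<in>{1..int Nx}. \<Sum>j\<in>{0..int Ny}.
             Ay (\<lambda>k l. psi k l * Mb n k l) i j * (Dy dy (\<lambda>k l. chi k l * \<mu> n k l) i j)^2))
       - dx * dy * (\<Sum>i\<in>{1..int Nx}. \<Sum>j\<in>{1..int Ny}.
            (1/2) * (1 / \<Gamma>) *
             ( \<bar>Dx dx psi (i-1) j\<bar> * (Ax (\<lambda>k l. (\<phi> (Suc n) k l - \<phi> n k l) / dt) (i-1) j)^2
             + \<bar>Dx dx psi i j\<bar> * (Ax (\<lambda>k l. (\<phi> (Suc n) k l - \<phi> n k l) / dt) i j)^2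
             + \<bar>Dy dy psi i (j-1)\<bar> * (Ay (\<lambda>k l. (\<phi> (Suc n) k l - \<phi> n k l) / dt) i (j-1))^2
             + \<bar>Dy dy psi i j\<bar> * (Ay (\<lambda>k l. (\<phi> (Suc n) k l - \<phi> n k l) / dt) i j)^2))
       - dx * dy * (\<Sum>i\<in>{1..int Nx}. \<Sum>j\<in>{1..int Ny}.
            \<mu> n i j * chi i j * Bop dx dy psi h3 i j)
     \<and> ((\<forall>i\<in>{1..int Nx}. \<forall>j\<in>{1..int Ny}. h3 i j = 0) \<longrightarrow>
          energy Nx Ny dx dy psi K \<alpha> h1 h2 (\<phi> (Suc n)) (q (Suc n))
            \<le> energy Nx Ny dx dy psi K \<alpha> h1 h2 (\<phi> n) (q n))"
  
proof (intro allI)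
  fix n
  define M' where "M' = (\<lambda>k l. psi k l * Mb n k l)"
  define w where "w = (\<lambda>k l. chi k l * \<mu> n k l)"
  define d where "d = (\<lambda>k l. (\<phi> (Suc n) k l - \<phi> n k l) / dt)"
  define ph where "ph = (\<lambda>k l. (\<phi> (Suc n) k l + \<phi> n k l) / 2)"
  define W where "W = (\<lambda>k l. \<alpha> * (ph k l - h1 k l) - h2 k l + (1 / \<Gamma>) * d k l)"
  define Z where "Z = (\<lambda>k i j.
      (1/2) * psi i j * (q k i j)^2
      + (1/2) * K * (Ax psi i j * (Dx dx (\<phi> k) i j)^2 + Ay psi i j * (Dy dy (\<phi> k) i j)^2)
      + (\<bar>Dx dx psi i j\<bar> * bdens \<alpha> (Ax h1 i j) (Ax h2 i j) (Ax (\<phi> k) i j)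
         + \<bar>Dy dy psi i j\<bar> * bdens \<alpha> (Ay h1 i j) (Ay h2 i j) (Ay (\<phi> k) i j)))"
  define Gam where "Gam = (\<lambda>i j. (1/\<Gamma>) * (\<bar>Dx dx psi i j\<bar> * (Ax d i j)^2 + \<bar>Dy dy psi i j\<bar> * (Ay d i j)^2))"
  define grad where "grad = (\<lambda>i j. Ax M' i j * Dx dx w i j * Dx dx w i j + Ay M' i j * Dy dy w i j * Dy dy w i j)"
  have dt0: "dt \<noteq> 0" using \<open>dt > 0\<close> by simp
  have dxp: "dx > 0" unfolding dx_def using \<open>Lx > 0\<close> \<open>Nx \<ge> 1\<close> by simp
  have dyp: "dy > 0" unfolding dy_def using \<open>Ly > 0\<close> \<open>Ny \<ge> 1\<close> by simp
  have nw: "neumann Nx Ny w"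
    using neumann_comb[OF bc_psi bc_mu[rule_format, of n], of "\<lambda>a b. 1 / a * b"]
    unfolding w_def chi_def by simp
  have nph: "neumann Nx Ny ph"
    using neumann_comb[OF bc_phi[rule_format, of "Suc n"] bc_phi[rule_format, of n], of "\<lambda>a b. (a + b) / 2"]
    unfolding ph_def by simp
  have E: "\<And>k. energy Nx Ny dx dy psi K \<alpha> h1 h2 (\<phi> k) (q k) = dx * dy * SS Nx Ny (Z k)"
    unfolding Z_def by (rule energy_face[OF bc_psi])
  have S1: "SS Nx Ny (\<lambda>i j. \<mu> n i j * d i j) = SS Nx Ny (\<lambda>i j. w i j * Dh dx dy M' w i j)
      - SS Nx Ny (\<lambda>i j. \<mu> n i j * chi i j * Bop dx dy psi h3 i j)"
    unfolding SS_diff[symmetric]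
  proof (rule SS_cong)
    fix i j assume ij: "i \<in> {1..int Nx}" "j \<in> {1..int Ny}"
    have "d i j = chi i j * Dh dx dy M' w i j - chi i j * Bop dx dy psi h3 i j"
      using eq1[rule_format, OF ij, of n] unfolding d_def M'_def w_def by simp
    then have "\<mu> n i j * d i j = \<mu> n i j * (chi i j * Dh dx dy M' w i j - chi i j * Bop dx dy psi h3 i j)"
      by simp
    then show "\<mu> n i j * d i j = w i j * Dh dx dy M' w i j - \<mu> n i j * chi i j * Bop dx dy psi h3 i j"
      by (simp add: w_def algebra_simps)
  qed
  have S2: "SS Nx Ny (\<lambda>i j. w i j * Dh dx dy M' w i j) = - SS Nx Ny grad"
    unfolding grad_def by (rule Dh_sum[OF nw])
  have S3: "SS Nx Ny (\<lambda>i j. \<mu> n i j * d i j) =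
      SS Nx Ny (\<lambda>i j. psi i j * gbar n i j * ((q (Suc n) i j + q n i j) / 2) * d i j)
      - K * SS Nx Ny (\<lambda>i j. d i j * Dh dx dy psi ph i j)
      + SS Nx Ny (\<lambda>i j. Bop dx dy psi W i j * d i j)"
    unfolding SS_cmul[symmetric] SS_diff[symmetric] SS_add[symmetric]
  proof (rule SS_cong)
    fix i j assume ij: "i \<in> {1..int Nx}" "j \<in> {1..int Ny}"
    have "\<mu> n i j = psi i j * gbar n i j * ((q (Suc n) i j + q n i j) / 2) - K * Dh dx dy psi ph i j
        + Bop dx dy psi W i j"
      using eq2[rule_format, OF ij, of n] unfolding W_def ph_def d_def by simp
    then show "\<mu> n i j * d i j = psi i j * gbar n i j * ((q (Suc n) i j + q n i j) / 2) * d i j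
      - K * (d i j * Dh dx dy psi ph i j) + Bop dx dy psi W i j * d i j"
      by (subst \<open>\<mu> n i j = _\<close>) (simp add: algebra_simps)
  qed
  have S4: "SS Nx Ny (\<lambda>i j. d i j * Dh dx dy psi ph i j)
      = - SS Nx Ny (\<lambda>i j. Ax psi i j * Dx dx ph i j * Dx dx d i j + Ay psi i j * Dy dy ph i j * Dy dy d i j)"
    by (rule Dh_sum[OF nph])
  have S5: "SS Nx Ny (\<lambda>i j. Bop dx dy psi W i j * d i j)
      = SS Nx Ny (\<lambda>i j. \<bar>Dx dx psi i j\<bar> * Ax W i j * Ax d i j + \<bar>Dy dy psi i j\<bar> * Ay W i j * Ay d i j)"
    by (rule Bop_sum[OF bc_psi])
  have S6: "SS Nx Ny (\<lambda>i j. psi i j * gbar n i j * ((q (Suc n) i j + q n i j) / 2) * d i j)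
      + K * SS Nx Ny (\<lambda>i j. Ax psi i j * Dx dx ph i j * Dx dx d i j + Ay psi i j * Dy dy ph i j * Dy dy d i j)
      + SS Nx Ny (\<lambda>i j. \<bar>Dx dx psi i j\<bar> * Ax W i j * Ax d i j + \<bar>Dy dy psi i j\<bar> * Ay W i j * Ay d i j)
      = (SS Nx Ny (Z (Suc n)) - SS Nx Ny (Z n)) / dt + SS Nx Ny Gam"
    unfolding SS_cmul[symmetric] SS_diff[symmetric] SS_add[symmetric] SS_divc[symmetric]
  proof (rule SS_cong)
    fix i j assume ij: "i \<in> {1..int Nx}" "j \<in> {1..int Ny}"
    have q3: "q (Suc n) i j - q n i j = gbar n i j * (\<phi> (Suc n) i j - \<phi> n i j)"
      using eq3[rule_format, OF ij, of n] .
    have a: "psi i j * gbar n i j * ((q (Suc n) i j + q n i j) / 2) * d i j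
        = ((1/2) * psi i j * (q (Suc n) i j)^2 - (1/2) * psi i j * (q n i j)^2) / dt"
    proof -
      have "psi i j * gbar n i j * ((q (Suc n) i j + q n i j) / 2) * d i j
         = psi i j * ((q (Suc n) i j + q n i j) / 2) * (gbar n i j * (\<phi> (Suc n) i j - \<phi> n i j)) / dt"
        unfolding d_def using dt0 by (simp add: field_simps)
      also have "\<dots> = psi i j * ((q (Suc n) i j + q n i j) / 2) * (q (Suc n) i j - q n i j) / dt"
        using q3 by simp
      finally show ?thesis using dt0 by (simp add: power2_eq_square field_simps)
    qed
    have dxph: "Dx dx ph i j = (Dx dx (\<phi> (Suc n)) i j + Dx dx (\<phi> n) i j) / 2"
      "Dy dy ph i j = (Dy dy (\<phi> (Suc n)) i j + Dy dy (\<phi> n) i j) / 2"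
      "Dx dx d i j = (Dx dx (\<phi> (Suc n)) i j - Dx dx (\<phi> n) i j) / dt"
      "Dy dy d i j = (Dy dy (\<phi> (Suc n)) i j - Dy dy (\<phi> n) i j) / dt"
      unfolding ph_def d_def Dx_def Dy_def using dt0 dxp dyp by (simp_all add: field_simps)
    have axw: "Ax W i j = \<alpha> * ((Ax (\<phi> (Suc n)) i j + Ax (\<phi> n) i j) / 2 - Ax h1 i j) - Ax h2 i j + (1/\<Gamma>) * Ax d i j"
      "Ay W i j = \<alpha> * ((Ay (\<phi> (Suc n)) i j + Ay (\<phi> n) i j) / 2 - Ay h1 i j) - Ay h2 i j + (1/\<Gamma>) * Ay d i j"
      "Ax d i j = (Ax (\<phi> (Suc n)) i j - Ax (\<phi> n) i j) / dt"
      "Ay d i j = (Ay (\<phi> (Suc n)) i j - Ay (\<phi> n) i j) / dt"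
      unfolding W_def ph_def d_def Ax_def Ay_def using dt0 \<open>\<Gamma> > 0\<close> by (simp_all add: field_simps)
    have b: "\<bar>Dx dx psi i j\<bar> * Ax W i j * Ax d i j
       = \<bar>Dx dx psi i j\<bar> * (bdens \<alpha> (Ax h1 i j) (Ax h2 i j) (Ax (\<phi> (Suc n)) i j)
          - bdens \<alpha> (Ax h1 i j) (Ax h2 i j) (Ax (\<phi> n) i j)) / dt
         + (1/\<Gamma>) * \<bar>Dx dx psi i j\<bar> * (Ax d i j)^2"
      by (rule face_W[OF dt0 axw(1) axw(3)])
    have c: "\<bar>Dy dy psi i j\<bar> * Ay W i j * Ay d i j
       = \<bar>Dy dy psi i j\<bar> * (bdens \<alpha> (Ay h1 i j) (Ay h2 i j) (Ay (\<phi> (Suc n)) i j)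
          - bdens \<alpha> (Ay h1 i j) (Ay h2 i j) (Ay (\<phi> n) i j)) / dt
         + (1/\<Gamma>) * \<bar>Dy dy psi i j\<bar> * (Ay d i j)^2"
      by (rule face_W[OF dt0 axw(2) axw(4)])
    have e: "K * (Ax psi i j * Dx dx ph i j * Dx dx d i j + Ay psi i j * Dy dy ph i j * Dy dy d i j)
       = ((1/2) * K * (Ax psi i j * (Dx dx (\<phi> (Suc n)) i j)^2 + Ay psi i j * (Dy dy (\<phi> (Suc n)) i j)^2)
         - (1/2) * K * (Ax psi i j * (Dx dx (\<phi> n) i j)^2 + Ay psi i j * (Dy dy (\<phi> n) i j)^2)) / dt"
      unfolding dxph using dt0 by (simp add: field_simps power2_eq_square)
    show "psi i j * gbar n i j * ((q (Suc n) i j + q n i j) / 2) * d i j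
      + K * (Ax psi i j * Dx dx ph i j * Dx dx d i j + Ay psi i j * Dy dy ph i j * Dy dy d i j)
      + (\<bar>Dx dx psi i j\<bar> * Ax W i j * Ax d i j + \<bar>Dy dy psi i j\<bar> * Ay W i j * Ay d i j)
      = (Z (Suc n) i j - Z n i j) / dt + Gam i j"
      unfolding a b c e Z_def Gam_def using dt0 \<open>\<Gamma> > 0\<close> by (simp add: field_simps)
  qed
  have Diss: "(\<Sum>i\<in>{1..int Nx}. \<Sum>j\<in>{1..int Ny}.
            (1/2) * (1 / \<Gamma>) *
             ( \<bar>Dx dx psi (i-1) j\<bar> * (Ax d (i-1) j)^2
             + \<bar>Dx dx psi i j\<bar> * (Ax d i j)^2
             + \<bar>Dy dy psi i (j-1)\<bar> * (Ay d i (j-1))^2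
             + \<bar>Dy dy psi i j\<bar> * (Ay d i j)^2)) = SS Nx Ny Gam"
  proof -
    have "SS Nx Ny (\<lambda>i j. (1/2) * ((1/\<Gamma>) * \<bar>Dx dx psi (i-1) j\<bar> * (Ax d (i-1) j)^2
        + (1/\<Gamma>) * \<bar>Dx dx psi i j\<bar> * (Ax d i j)^2
        + (1/\<Gamma>) * \<bar>Dy dy psi i (j-1)\<bar> * (Ay d i (j-1))^2 + (1/\<Gamma>) * \<bar>Dy dy psi i j\<bar> * (Ay d i j)^2))
      = SS Nx Ny (\<lambda>i j. (1/\<Gamma>) * \<bar>Dx dx psi i j\<bar> * (Ax d i j)^2 + (1/\<Gamma>) * \<bar>Dy dy psi i j\<bar> * (Ay d i j)^2)"
      using neumann_D[OF bc_psi] by (intro face_sum[where Gx = "\<lambda>i j. (1/\<Gamma>) * \<bar>Dx dx psi i j\<bar> * (Ax d i j)^2"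
          and Gy = "\<lambda>i j. (1/\<Gamma>) * \<bar>Dy dy psi i j\<bar> * (Ay d i j)^2"]) auto
    then show ?thesis unfolding SS_def Gam_def by (simp add: algebra_simps)
  qed
  have Grad: "(\<Sum>i\<in>{0..int Nx}. \<Sum>j\<in>{1..int Ny}. Ax M' i j * (Dx dx w i j)^2)
        + (\<Sum>i\<in>{1..int Nx}. \<Sum>j\<in>{0..int Ny}. Ay M' i j * (Dy dy w i j)^2) = SS Nx Ny grad"
  proof -
    have i0: "{0..int Nx} = insert 0 {1..int Nx}" "{0..int Ny} = insert 0 {1..int Ny}" by auto
    have z1: "(\<Sum>j\<in>{1..int Ny}. Ax M' 0 j * (Dx dx w 0 j)^2) = 0"
      using neumann_D(1)[OF nw] by simp
    have z2: "(\<Sum>i\<in>{1..int Nx}. \<Sum>j\<in>{0..int Ny}. Ay M' i j * (Dy dy w i j)^2)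
       = (\<Sum>i\<in>{1..int Nx}. \<Sum>j\<in>{1..int Ny}. Ay M' i j * (Dy dy w i j)^2)"
      by (rule sum.cong[OF refl]) (simp add: i0 neumann_D(3)[OF nw])
    show ?thesis unfolding z2 SS_def grad_def
    proof -
      have "(\<Sum>i\<in>{0..int Nx}. \<Sum>j\<in>{1..int Ny}. Ax M' i j * (Dx dx w i j)^2)
          = (\<Sum>i\<in>{1..int Nx}. \<Sum>j\<in>{1..int Ny}. Ax M' i j * (Dx dx w i j)^2)"
        unfolding i0 using z1 by simp
      then show "(\<Sum>i\<in>{0..int Nx}. \<Sum>j\<in>{1..int Ny}. Ax M' i j * (Dx dx w i j)^2)
        + (\<Sum>i\<in>{1..int Nx}. \<Sum>j\<in>{1..int Ny}. Ay M' i j * (Dy dy w i j)^2)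
        = (\<Sum>i\<in>{1..int Nx}. \<Sum>j\<in>{1..int Ny}. Ax M' i j * Dx dx w i j * Dx dx w i j
             + Ay M' i j * Dy dy w i j * Dy dy w i j)"
        by (simp add: sum.distrib power2_eq_square mult.assoc)
    qed
  qed
  have main: "(energy Nx Ny dx dy psi K \<alpha> h1 h2 (\<phi> (Suc n)) (q (Suc n))
        - energy Nx Ny dx dy psi K \<alpha> h1 h2 (\<phi> n) (q n)) / dt
     = - dx * dy * SS Nx Ny grad - dx * dy * SS Nx Ny Gam
       - dx * dy * SS Nx Ny (\<lambda>i j. \<mu> n i j * chi i j * Bop dx dy psi h3 i j)"
  proof -
    have "(SS Nx Ny (Z (Suc n)) - SS Nx Ny (Z n)) / dt + SS Nx Ny Gam
        = - SS Nx Ny grad - SS Nx Ny (\<lambda>i j. \<mu> n i j * chi i j * Bop dx dy psi h3 i j)"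
      using S1 S2 S3 S4 S5 S6 by simp
    then have "(SS Nx Ny (Z (Suc n)) - SS Nx Ny (Z n)) / dt
        = - SS Nx Ny grad - SS Nx Ny Gam - SS Nx Ny (\<lambda>i j. \<mu> n i j * chi i j * Bop dx dy psi h3 i j)"
      by linarith
    then have h: "(SS Nx Ny (Z (Suc n)) - SS Nx Ny (Z n)) / dt
        = - (SS Nx Ny grad + SS Nx Ny Gam + SS Nx Ny (\<lambda>i j. \<mu> n i j * chi i j * Bop dx dy psi h3 i j))"
      by simp
    have "(dx * dy * SS Nx Ny (Z (Suc n)) - dx * dy * SS Nx Ny (Z n)) / dt
        = dx * dy * ((SS Nx Ny (Z (Suc n)) - SS Nx Ny (Z n)) / dt)"
      by (simp add: right_diff_distrib)
    also have "\<dots> = - dx * dy * SS Nx Ny grad - dx * dy * SS Nx Ny Gam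
       - dx * dy * SS Nx Ny (\<lambda>i j. \<mu> n i j * chi i j * Bop dx dy psi h3 i j)"
    proof -
      have r: "\<And>x y a b c::real. x * y * (- (a + b + c)) = - x * y * a - x * y * b - x * y * c"
        by (simp add: algebra_simps)
      show ?thesis unfolding h by (rule r)
    qed
    finally show ?thesis unfolding E .
  qed
  have A: "(energy Nx Ny dx dy psi K \<alpha> h1 h2 (\<phi> (Suc n)) (q (Suc n))
        - energy Nx Ny dx dy psi K \<alpha> h1 h2 (\<phi> n) (q n)) / dt
     = - dx * dy *
         ((\<Sum>i\<in>{0..int Nx}. \<Sum>j\<in>{1..int Ny}. Ax M' i j * (Dx dx w i j)^2)
        + (\<Sum>i\<in>{1..int Nx}. \<Sum>j\<in>{0..int Ny}. Ay M' i j * (Dy dy w i j)^2))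
       - dx * dy * (\<Sum>i\<in>{1..int Nx}. \<Sum>j\<in>{1..int Ny}.
            (1/2) * (1 / \<Gamma>) *
             ( \<bar>Dx dx psi (i-1) j\<bar> * (Ax d (i-1) j)^2
             + \<bar>Dx dx psi i j\<bar> * (Ax d i j)^2
             + \<bar>Dy dy psi i (j-1)\<bar> * (Ay d i (j-1))^2
             + \<bar>Dy dy psi i j\<bar> * (Ay d i j)^2))
       - dx * dy * (\<Sum>i\<in>{1..int Nx}. \<Sum>j\<in>{1..int Ny}.
            \<mu> n i j * chi i j * Bop dx dy psi h3 i j)"
  proof -
    have Bs: "(\<Sum>i\<in>{1..int Nx}. \<Sum>j\<in>{1..int Ny}. \<mu> n i j * chi i j * Bop dx dy psi h3 i j)
        = SS Nx Ny (\<lambda>i j. \<mu> n i j * chi i j * Bop dx dy psi h3 i j)"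
      by (simp add: SS_def)
    show ?thesis unfolding Grad Diss Bs by (rule main)
  qed
  have B: "energy Nx Ny dx dy psi K \<alpha> h1 h2 (\<phi> (Suc n)) (q (Suc n))
            \<le> energy Nx Ny dx dy psi K \<alpha> h1 h2 (\<phi> n) (q n)"
    if h3z: "\<forall>i\<in>{1..int Nx}. \<forall>j\<in>{1..int Ny}. h3 i j = 0"
  proof -
    have b0: "SS Nx Ny (\<lambda>i j. \<mu> n i j * chi i j * Bop dx dy psi h3 i j) = 0"
      unfolding SS_def using Bop_zero[OF bc_psi h3z] by simp
    have g0: "SS Nx Ny grad \<ge> 0"
    proof (rule SS_nonneg)
      fix i j assume ij: "i \<in> {1..int Nx}" "j \<in> {1..int Ny}"
      have x: "Ax M' i j * Dx dx w i j * Dx dx w i j \<ge> 0"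
      proof (cases "i = int Nx")
        case True then show ?thesis using neumann_D(2)[OF nw, of j] ij by simp
      next
        case False
        then have "i + 1 \<in> {1..int Nx}" using ij by auto
        then have "Ax M' i j > 0" using ij psi_pos M_pos unfolding Ax_def M'_def
          by (simp add: add_pos_pos)
        then show ?thesis by (simp add: mult.assoc)
      qed
      have y: "Ay M' i j * Dy dy w i j * Dy dy w i j \<ge> 0"
      proof (cases "j = int Ny")
        case True then show ?thesis using neumann_D(4)[OF nw, of i] ij by simp
      next
        case False
        then have "j + 1 \<in> {1..int Ny}" using ij by auto
        then have "Ay M' i j > 0" using ij psi_pos M_pos unfolding Ay_def M'_def
          by (simp add: add_pos_pos)
        then show ?thesis by (simp add: mult.assoc)
      qed
      show "grad i j \<ge> 0" unfolding grad_def using x y by simp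
    qed
    have gam0: "SS Nx Ny Gam \<ge> 0"
      by (rule SS_nonneg) (use \<open>\<Gamma> > 0\<close> in \<open>simp add: Gam_def\<close>)
    have dxy: "dx * dy > 0" using dxp dyp by simp
    have "(energy Nx Ny dx dy psi K \<alpha> h1 h2 (\<phi> (Suc n)) (q (Suc n))
        - energy Nx Ny dx dy psi K \<alpha> h1 h2 (\<phi> n) (q n)) / dt \<le> 0"
    proof -
      have "dx * dy * SS Nx Ny grad \<ge> 0" "dx * dy * SS Nx Ny Gam \<ge> 0"
        using g0 gam0 dxy by simp_all
      then show ?thesis unfolding main b0 by simp
    qed
    then show ?thesis using \<open>dt > 0\<close> by (simp add: divide_le_0_iff)
  qed
  show "
     (energy Nx Ny dx dy psi K \<alpha> h1 h2 (\<phi> (Suc n)) (q (Suc n))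
        - energy Nx Ny dx dy psi K \<alpha> h1 h2 (\<phi> n) (q n)) / dt
     = - dx * dy *
         ((\<Sum>i\<in>{0..int Nx}. \<Sum>j\<in>{1..int Ny}.
             Ax (\<lambda>k l. psi k l * Mb n k l) i j * (Dx dx (\<lambda>k l. chi k l * \<mu> n k l) i j)^2)
        + (\<Sum>i\<in>{1..int Nx}. \<Sum>j\<in>{0..int Ny}.
             Ay (\<lambda>k l. psi k l * Mb n k l) i j * (Dy dy (\<lambda>k l. chi k l * \<mu> n k l) i j)^2))
       - dx * dy * (\<Sum>i\<in>{1..int Nx}. \<Sum>j\<in>{1..int Ny}.
            (1/2) * (1 / \<Gamma>) *
             ( \<bar>Dx dx psi (i-1) j\<bar> * (Ax (\<lambda>k l. (\<phi> (Suc n) k l - \<phi> n k l) / dt) (i-1) j)^2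
             + \<bar>Dx dx psi i j\<bar> * (Ax (\<lambda>k l. (\<phi> (Suc n) k l - \<phi> n k l) / dt) i j)^2
             + \<bar>Dy dy psi i (j-1)\<bar> * (Ay (\<lambda>k l. (\<phi> (Suc n) k l - \<phi> n k l) / dt) i (j-1))^2
             + \<bar>Dy dy psi i j\<bar> * (Ay (\<lambda>k l. (\<phi> (Suc n) k l - \<phi> n k l) / dt) i j)^2))
       - dx * dy * (\<Sum>i\<in>{1..int Nx}. \<Sum>j\<in>{1..int Ny}.
            \<mu> n i j * chi i j * Bop dx dy psi h3 i j)
     \<and> ((\<forall>i\<in>{1..int Nx}. \<forall>j\<in>{1..int Ny}. h3 i j = 0) \<longrightarrow>
          energy Nx Ny dx dy psi K \<alpha> h1 h2 (\<phi> (Suc n)) (q (Suc n))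
            \<le> energy Nx Ny dx dy psi K \<alpha> h1 h2 (\<phi> n) (q n))"
    using A B unfolding M'_def w_def d_def by blast
qed

end
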